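(* There is a constant $C>0$ such that for every $n$ and every set $T\subseteq V_n$, the extension complexity of $\operatorname{dom}(P_{T\text{-cut}}(n))$ is at most $C\, n^2\, 2^{|T|}$.
   Context: $K_n=(V_n,E_n)$ is the complete graph on $n$ nodes. For $T\subseteq V_n$, a $T$-cut is an edge set $\delta(S)=\{\{v,w\}\in E_n : v\in S, w\notin S\}$ for some $S\subseteq V_n$ with $|S\cap T|$ odd. $P_{T\text{-cut}}(n)$ is the convex hull of characteristic vectors of $T$-cuts and $\operatorname{dom}(P_{T\text{-cut}}(n)) = P_{T\text{-cut}}(n)+\mathbb{R}^{E_n}_+$. Extension complexity $\operatorname{xc}(P)$ is the minimum number of facets of a polyhedron $Q$ with $P=\pi(Q)$ for a linear map $\pi$. *)

theory Defs
  imports "HOL-Analysis.Analysis" "HOL-Library.Function_Algebras"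
begin

(* Real vector structure on functions, pointwise.  Points of R^X are represented
   as functions X' => real that vanish outside the coordinate set X. *)
instantiation "fun" :: (type, real_vector) real_vector
begin
definition scaleR_fun :: "real \<Rightarrow> ('a \<Rightarrow> 'b) \<Rightarrow> 'a \<Rightarrow> 'b"
  where "scaleR_fun c f = (\<lambda>x. c *\<^sub>R f x)"
instance
  by standard (auto simp: scaleR_fun_def fun_eq_iff plus_fun_def algebra_simps)
end

definition V :: "nat \<Rightarrow> nat set" where
  "V n = {..<n}"

definition E :: "nat \<Rightarrow> nat set set" where
  "E n = {{v, w} | v w. v \<in> V n \<and> w \<in> V n \<and> v \<noteq> w}"

definition delta :: "nat \<Rightarrow> nat set \<Rightarrow> nat set set" where
  "delta n S = {e \<in> E n. \<exists>v w. e = {v, w} \<and> v \<in> S \<and> w \<notin> S}"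

definition T_cuts :: "nat \<Rightarrow> nat set \<Rightarrow> nat set set set" where
  "T_cuts n T = {delta n S | S. S \<subseteq> V n \<and> odd (card (S \<inter> T))}"

definition chi :: "nat set set \<Rightarrow> nat set \<Rightarrow> real" where
  "chi F = (\<lambda>e. if e \<in> F then 1 else 0)"

definition P_Tcut :: "nat \<Rightarrow> nat set \<Rightarrow> (nat set \<Rightarrow> real) set" where
  "P_Tcut n T = convex hull (chi ` T_cuts n T)"

definition dom_P :: "nat \<Rightarrow> (nat set \<Rightarrow> real) set \<Rightarrow> (nat set \<Rightarrow> real) set" where
  "dom_P n P = {p + r | p r. p \<in> P \<and> (\<forall>e \<in> E n. r e \<ge> 0) \<and> (\<forall>e. e \<notin> E n \<longrightarrow> r e = 0)}"

definition polyhedron_in :: "nat \<Rightarrow> (nat \<Rightarrow> real) set \<Rightarrow> bool" where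
  "polyhedron_in d Q \<longleftrightarrow>
     (\<exists>k a b. Q = {y. (\<forall>i\<ge>d. y i = 0) \<and>
                      (\<forall>j<k. (\<Sum>i<d. (a :: nat \<Rightarrow> nat \<Rightarrow> real) j i * y i) \<le> (b j :: real))})"

definition is_facet :: "(nat \<Rightarrow> real) set \<Rightarrow> (nat \<Rightarrow> real) set \<Rightarrow> bool" where
  "is_facet F Q \<longleftrightarrow> F face_of Q \<and> F \<noteq> {} \<and> F \<noteq> Q \<and>
     (\<forall>G. G face_of Q \<and> G \<noteq> Q \<and> F \<subseteq> G \<longrightarrow> G = F)"

definition num_facets :: "(nat \<Rightarrow> real) set \<Rightarrow> nat" where
  "num_facets Q = card {F. is_facet F Q}"

definition lin_map :: "'e set \<Rightarrow> nat \<Rightarrow> ('e \<Rightarrow> nat \<Rightarrow> real) \<Rightarrow> (nat \<Rightarrow> real) \<Rightarrow> ('e \<Rightarrow> real)" where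
  "lin_map I d M y = (\<lambda>e. if e \<in> I then (\<Sum>i<d. M e i * y i) else 0)"

definition xc :: "'e set \<Rightarrow> ('e \<Rightarrow> real) set \<Rightarrow> nat" where
  "xc I P = (LEAST k. \<exists>d Q M. polyhedron_in d Q \<and> P = lin_map I d M ` Q \<and> num_facets Q = k)"

end

theory Submission
  imports Defs "HOL-Library.Nat_Bijection"
begin


definition lin :: "nat \<Rightarrow> (nat \<Rightarrow> real) \<Rightarrow> (nat \<Rightarrow> real) \<Rightarrow> real" where
  "lin d a y = (\<Sum>i<d. a i * y i)"

definition PQ :: "nat \<Rightarrow> ((nat \<Rightarrow> real) \<times> real) set \<Rightarrow> (nat \<Rightarrow> real) set" where
  "PQ d CS = {y. (\<forall>i\<ge>d. y i = 0) \<and> (\<forall>(a,b)\<in>CS. lin d a y \<le> b)}"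

lemma scaleR_fun_apply[simp]: "(c *\<^sub>R f) x = c *\<^sub>R f x"
  by (simp add: scaleR_fun_def)

lemma lin_comb: "lin d a (u *\<^sub>R y + v *\<^sub>R z) = u * lin d a y + v * lin d a z"
  by (simp add: lin_def algebra_simps sum.distrib sum_distrib_left)

lemma lin_diff: "lin d a (y - z) = lin d a y - lin d a z"
  by (simp add: lin_def algebra_simps sum_subtractf)

lemma convex_PQ: "convex (PQ d CS)"
  unfolding convex_def
proof (intro ballI allI impI)
  fix x y and u v :: real
  assume x: "x \<in> PQ d CS" and y: "y \<in> PQ d CS" and uv: "0 \<le> u" "0 \<le> v" "u + v = 1"
  show "u *\<^sub>R x + v *\<^sub>R y \<in> PQ d CS"
    unfolding PQ_def
  proof (intro CollectI conjI allI impI ballI)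
    fix i assume "d \<le> i" then show "(u *\<^sub>R x + v *\<^sub>R y) i = 0" using x y by (simp add: PQ_def)
  next
    fix c assume c: "c \<in> CS"
    obtain a b where cab: "c = (a,b)" by fastforce
    have "lin d a x \<le> b" "lin d a y \<le> b" using x y c cab by (auto simp: PQ_def)
    hence "u * lin d a x + v * lin d a y \<le> u * b + v * b"
      using uv by (intro add_mono mult_left_mono) auto
    also have "\<dots> = b" using uv by (metis distrib_right mult_1)
    finally show "case c of (a, b) \<Rightarrow> lin d a (u *\<^sub>R x + v *\<^sub>R y) \<le> b"
      using cab by (simp add: lin_comb)
  qed
qed

lemma face_PQ:
  assumes "(a,b) \<in> CS"
  shows "(PQ d CS \<inter> {y. lin d a y = b}) face_of PQ d CS"
  unfolding face_of_def
proof (intro conjI ballI impI)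
  show "convex (PQ d CS \<inter> {y. lin d a y = b})"
  proof (rule convex_Int[OF convex_PQ])
    show "convex {y. lin d a y = b}"
      unfolding convex_def by (auto simp: lin_comb distrib_right[symmetric])
  qed
next
  fix p r x assume p: "p \<in> PQ d CS" and r: "r \<in> PQ d CS" and x: "x \<in> PQ d CS \<inter> {y. lin d a y = b}"
    and seg: "x \<in> open_segment p r"
  obtain u where u: "0 < u" "u < 1" "x = (1 - u) *\<^sub>R p + u *\<^sub>R r" using seg by (auto simp: in_segment)
  have lp: "lin d a p \<le> b" and lr: "lin d a r \<le> b" using p r assms by (auto simp: PQ_def)
  have "(1-u) * lin d a p + u * lin d a r = b" using x u by (simp add: lin_comb)
  hence s0: "(1-u) * (b - lin d a p) + u * (b - lin d a r) = 0" by (simp add: algebra_simps)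
  have h1: "(1-u) * (b - lin d a p) \<ge> 0" "u * (b - lin d a r) \<ge> 0" using lp lr u by simp_all
  hence "(1-u) * (b - lin d a p) = 0" "u * (b - lin d a r) = 0" using s0 by linarith+
  hence "lin d a p = b \<and> lin d a r = b" using u by simp
  thus "p \<in> PQ d CS \<inter> {y. lin d a y = b}" "r \<in> PQ d CS \<inter> {y. lin d a y = b}" using p r by auto
qed auto

lemma strict_point:
  assumes F: "convex F" "F \<noteq> {}" and fin: "finite K"
    and wit: "\<And>c. c \<in> K \<Longrightarrow> \<exists>w\<in>F. lin d (fst c) w < snd c"
    and le: "\<And>w c. w \<in> F \<Longrightarrow> c \<in> K \<Longrightarrow> lin d (fst c) w \<le> snd c"
  shows "\<exists>y\<in>F. \<forall>c\<in>K. lin d (fst c) y < snd c"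
  using fin wit le
proof (induction K rule: finite_induct)
  case empty then show ?case using F by auto
next
  case (insert c K)
  then obtain y where y: "y \<in> F" "\<forall>c\<in>K. lin d (fst c) y < snd c" by auto
  obtain w where w: "w \<in> F" "lin d (fst c) w < snd c" using insert.prems(1)[of c] by auto
  let ?z = "(1/2) *\<^sub>R y + (1/2) *\<^sub>R w"
  have z: "?z \<in> F" using F(1) y w unfolding convex_def by auto
  have "\<forall>c'\<in>insert c K. lin d (fst c') ?z < snd c'"
  proof
    fix c' assume c': "c' \<in> insert c K"
    have "lin d (fst c') y \<le> snd c'" "lin d (fst c') w \<le> snd c'" using insert.prems(2) y w c' by auto
    moreover have "lin d (fst c') y < snd c' \<or> lin d (fst c') w < snd c'" using c' y w by auto
    ultimately show "lin d (fst c') ?z < snd c'" by (simp add: lin_comb) linarith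
  qed
  then show ?case using z by blast
qed

lemma facet_PQ:
  assumes fin: "finite CS" and Fq: "is_facet F (PQ d CS)"
  shows "\<exists>c\<in>CS. F = PQ d CS \<inter> {y. lin d (fst c) y = snd c}"
proof -
  let ?Q = "PQ d CS"
  have Ff: "F face_of ?Q" "F \<noteq> {}" "F \<noteq> ?Q"
    and mx: "\<And>G. G face_of ?Q \<Longrightarrow> G \<noteq> ?Q \<Longrightarrow> F \<subseteq> G \<Longrightarrow> G = F"
    using Fq unfolding is_facet_def by auto
  have FQ: "F \<subseteq> ?Q" and cF: "convex F" using Ff(1) face_of_imp_subset face_of_imp_convex by auto
  show ?thesis
  proof (rule ccontr)
    assume nc: "\<not> ?thesis"
    have key: "\<And>c. c \<in> CS \<Longrightarrow> F \<subseteq> {y. lin d (fst c) y = snd c} \<Longrightarrow> ?Q \<subseteq> {y. lin d (fst c) y = snd c}"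
    proof -
      fix c assume c: "c \<in> CS" and sub: "F \<subseteq> {y. lin d (fst c) y = snd c}"
      obtain a b where cab: "c = (a,b)" by fastforce
      have G: "(?Q \<inter> {y. lin d a y = b}) face_of ?Q" using face_PQ c cab by auto
      show "?Q \<subseteq> {y. lin d (fst c) y = snd c}"
      proof (rule ccontr)
        assume "\<not> ?Q \<subseteq> {y. lin d (fst c) y = snd c}"
        hence "?Q \<inter> {y. lin d a y = b} \<noteq> ?Q" using cab by auto
        moreover have "F \<subseteq> ?Q \<inter> {y. lin d a y = b}" using FQ sub cab by auto
        ultimately have "?Q \<inter> {y. lin d a y = b} = F" using mx G by blast
        thus False using nc c cab by auto
      qed
    qed
    define K where "K = {c \<in> CS. \<not> F \<subseteq> {y. lin d (fst c) y = snd c}}"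
    have finK: "finite K" using fin K_def by auto
    have leQ: "\<And>w c. w \<in> ?Q \<Longrightarrow> c \<in> CS \<Longrightarrow> lin d (fst c) w \<le> snd c"
      unfolding PQ_def by auto
    obtain ys where ys: "ys \<in> F" "\<forall>c\<in>K. lin d (fst c) ys < snd c"
    proof -
      have "\<exists>y\<in>F. \<forall>c\<in>K. lin d (fst c) y < snd c"
      proof (rule strict_point[OF cF Ff(2) finK])
        fix c assume "c \<in> K"
        then obtain w where "w \<in> F" "lin d (fst c) w \<noteq> snd c" unfolding K_def by auto
        moreover have "lin d (fst c) w \<le> snd c" using leQ \<open>c \<in> K\<close> FQ calculation K_def by auto
        ultimately show "\<exists>w\<in>F. lin d (fst c) w < snd c" by force
      next
        fix w c assume "w \<in> F" "c \<in> K" thus "lin d (fst c) w \<le> snd c" using leQ FQ K_def by auto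
      qed
      thus ?thesis using that by blast
    qed
    have ysQ: "ys \<in> ?Q" using ys FQ by auto
    have eqc: "\<And>c q. c \<in> CS \<Longrightarrow> c \<notin> K \<Longrightarrow> q \<in> ?Q \<Longrightarrow> lin d (fst c) q = snd c"
      using key K_def by blast
    have "?Q \<subseteq> F"
    proof
      fix q assume q: "q \<in> ?Q"
      show "q \<in> F"
      proof (cases "q = ys")
        case True then show ?thesis using ys by simp
      next
        case False
        define m where "m c = (snd c - lin d (fst c) ys) / (\<bar>lin d (fst c) ys - lin d (fst c) q\<bar> + 1)" for c
        define eps where "eps = Min (insert 1 (m ` K))"
        have mpos: "\<And>c. c \<in> K \<Longrightarrow> m c > 0" using ys unfolding m_def by auto
        have epspos: "eps > 0" unfolding eps_def using finK mpos by auto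
        have epsle: "\<And>c. c \<in> K \<Longrightarrow> eps \<le> m c" unfolding eps_def using finK by auto
        define w where "w = (1 + eps) *\<^sub>R ys + (- eps) *\<^sub>R q"
        have wQ: "w \<in> ?Q"
          unfolding PQ_def
        proof (intro CollectI conjI allI impI ballI)
          fix i assume "d \<le> i" thus "w i = 0" using ysQ q unfolding w_def PQ_def by auto
        next
          fix c assume c: "c \<in> CS"
          have lw: "lin d (fst c) w = lin d (fst c) ys + eps * (lin d (fst c) ys - lin d (fst c) q)"
            unfolding w_def lin_comb by (simp add: algebra_simps)
          have "lin d (fst c) w \<le> snd c"
          proof (cases "c \<in> K")
            case True
            let ?D = "\<bar>lin d (fst c) ys - lin d (fst c) q\<bar> + 1"
            have Dp: "?D > 0" by simp
            have "eps * (lin d (fst c) ys - lin d (fst c) q) \<le> eps * ?D"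
              using epspos by (intro mult_left_mono) auto
            also have "\<dots> \<le> m c * ?D" using epsle[OF True] Dp by (intro mult_right_mono) auto
            also have "\<dots> = snd c - lin d (fst c) ys" unfolding m_def using Dp by simp
            finally show ?thesis using lw by simp
          next
            case False
            then show ?thesis using lw eqc[OF c False q] eqc[OF c False ysQ] by simp
          qed
          thus "case c of (a, b) \<Rightarrow> lin d a w \<le> b" by (simp add: case_prod_beta)
        qed
        have "ys \<in> open_segment q w"
        proof -
          define u where "u = 1 / (1 + eps)"
          have u1: "u * (1+eps) = 1" using epspos unfolding u_def by simp
          have "ys x = (1 - u) * q x + u * ((1+eps) * ys x + -eps * q x)" for x
          proof -
            have "(1 - u) * q x + u * ((1+eps) * ys x + -eps * q x) = q x * (1 - u*(1+eps)) + (u*(1+eps)) * ys x"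
              by (simp add: algebra_simps)
            thus ?thesis using u1 by simp
          qed
          hence "ys = (1 - u) *\<^sub>R q + u *\<^sub>R w" unfolding w_def by (simp add: fun_eq_iff)
          moreover have "q \<noteq> w"
          proof
            assume "q = w"
            hence "(1 + eps) *\<^sub>R q = (1 + eps) *\<^sub>R ys" unfolding w_def by (simp add: algebra_simps)
            hence "q = ys" using epspos by simp
            thus False using False by simp
          qed
          moreover have "0 < u" "u < 1" using epspos unfolding u_def by auto
          ultimately show ?thesis unfolding in_segment by blast
        qed
        thus ?thesis using Ff(1) q wQ ys(1) unfolding face_of_def by blast
      qed
    qed
    thus False using FQ Ff(3) by auto
  qed
qed

lemma num_facets_PQ:
  assumes fin: "finite CS"
  shows "num_facets (PQ d CS) \<le> card CS"
proof -
  have "{F. is_facet F (PQ d CS)} \<subseteq> (\<lambda>c. PQ d CS \<inter> {y. lin d (fst c) y = snd c}) ` CS"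
    using facet_PQ[OF fin] by blast
  hence "card {F. is_facet F (PQ d CS)} \<le> card ((\<lambda>c. PQ d CS \<inter> {y. lin d (fst c) y = snd c}) ` CS)"
    using fin by (intro card_mono) auto
  also have "\<dots> \<le> card CS" using card_image_le fin by blast
  finally show ?thesis unfolding num_facets_def .
qed

lemma polyhedron_PQ:
  assumes fin: "finite CS"
  shows "polyhedron_in d (PQ d CS)"
proof -
  obtain h where h: "bij_betw h {0..<card CS} CS" using ex_bij_betw_nat_finite[OF fin] by blast
  define a where "a j = fst (h j)" for j
  define b where "b j = snd (h j)" for j
  have "PQ d CS = {y. (\<forall>i\<ge>d. y i = 0) \<and> (\<forall>j<card CS. (\<Sum>i<d. a j i * y i) \<le> b j)}"
  proof -
    have "(\<forall>(a,b)\<in>CS. lin d a y \<le> b) \<longleftrightarrow> (\<forall>j<card CS. (\<Sum>i<d. a j i * y i) \<le> b j)" for y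
    proof
      assume "\<forall>(a,b)\<in>CS. lin d a y \<le> b"
      thus "\<forall>j<card CS. (\<Sum>i<d. a j i * y i) \<le> b j"
        using h unfolding a_def b_def lin_def bij_betw_def by (auto simp: case_prod_beta)
    next
      assume A: "\<forall>j<card CS. (\<Sum>i<d. a j i * y i) \<le> b j"
      show "\<forall>(a,b)\<in>CS. lin d a y \<le> b"
      proof (clarify)
        fix a' b' assume "(a', b') \<in> CS"
        then obtain j where "j < card CS" "h j = (a',b')" using h unfolding bij_betw_def by force
        thus "lin d a' y \<le> b'" using A unfolding a_def b_def lin_def by force
      qed
    qed
    thus ?thesis unfolding PQ_def by auto
  qed
  thus ?thesis unfolding polyhedron_in_def by blast
qed



lemma E_pair: "u < n \<Longrightarrow> v < n \<Longrightarrow> u \<noteq> v \<Longrightarrow> {u,v} \<in> E n"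
  unfolding E_def V_def by blast

lemma delta_pair:
  assumes "u < n" "v < n" "u \<noteq> v"
  shows "{u,v} \<in> delta n S \<longleftrightarrow> (u \<in> S \<longleftrightarrow> v \<notin> S)"
  using E_pair[OF assms] unfolding delta_def by (auto simp: doubleton_eq_iff)

lemma chi_delta_pair:
  assumes "u < n" "v < n" "u \<noteq> v"
  shows "chi (delta n S) {u,v} = (if (u \<in> S \<longleftrightarrow> v \<notin> S) then 1 else 0)"
  using delta_pair[OF assms] unfolding chi_def by auto

lemma abs_identity:
  fixes t t2 al x y :: real
  assumes t: "0 < t" "t < t2" and al: "(1 - al) * t2 = t" "0 \<le> al" "al \<le> 1"
    and x: "x = 0 \<or> x = t \<or> x \<ge> t2" and y: "y = 0 \<or> y = t \<or> y \<ge> t2"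
  shows "\<bar>x - y\<bar> = al * \<bar>(if x = t then 0 else x) - (if y = t then 0 else y)\<bar>
     + (1 - al) * \<bar>(if x = t then t2 else x) - (if y = t then t2 else y)\<bar>"
proof -
  have a2: "al * t2 = t2 - t" using al(1) by (simp add: algebra_simps)
  show ?thesis
  proof (cases "x = t")
    case xt: True
    show ?thesis
    proof (cases "y = t")
      case True then show ?thesis using xt by simp
    next
      case False
      then have "y = 0 \<or> y \<ge> t2" using y by auto
      then show ?thesis
      proof
        assume "y = 0" then show ?thesis using xt t al by (simp add: abs_if)
      next
        assume yy: "y \<ge> t2"
        have "\<bar>x - y\<bar> = y - t" using xt yy t by auto
        moreover have "al * \<bar>0 - y\<bar> + (1 - al) * \<bar>t2 - y\<bar> = al * y + (1 - al) * (y - t2)"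
          using yy t al by (simp add: abs_if)
        moreover have "al * y + (1 - al) * (y - t2) = y - t" using al(1) by (simp add: algebra_simps)
        ultimately show ?thesis using xt False by simp
      qed
    qed
  next
    case xn: False
    show ?thesis
    proof (cases "y = t")
      case False then show ?thesis using xn by (simp add: algebra_simps)
    next
      case yt: True
      then have "x = 0 \<or> x \<ge> t2" using x xn by auto
      then show ?thesis
      proof
        assume "x = 0" then show ?thesis using yt t al by (simp add: abs_if)
      next
        assume xx: "x \<ge> t2"
        have "\<bar>x - y\<bar> = x - t" using yt xx t by auto
        moreover have "al * \<bar>x - 0\<bar> + (1 - al) * \<bar>x - t2\<bar> = al * x + (1 - al) * (x - t2)"
          using xx t al by (simp add: abs_if)
        moreover have "al * x + (1 - al) * (x - t2) = x - t" using al(1) by (simp add: algebra_simps)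
        ultimately show ?thesis using yt xn by simp
      qed
    qed
  qed
qed

definition Mset :: "nat \<Rightarrow> (nat \<Rightarrow> real) \<Rightarrow> real set" where
  "Mset n c = c ` {..<n} \<inter> {0<..<1}"

lemma convex_P_Tcut: "convex (P_Tcut n T)"
  unfolding P_Tcut_def by simp

lemma level_aux:
  assumes AT: "A \<subseteq> T" "T \<subseteq> V n" "odd (card A)"
  shows "card (Mset n c) = N \<Longrightarrow> (\<forall>v<n. 0 \<le> c v \<and> c v \<le> 1) \<Longrightarrow> (\<forall>a\<in>A. c a = 0) \<Longrightarrow> (\<forall>b\<in>T-A. c b = 1)
    \<Longrightarrow> \<exists>p\<in>P_Tcut n T. \<forall>u v. u<n \<longrightarrow> v<n \<longrightarrow> u\<noteq>v \<longrightarrow> p {u,v} \<le> \<bar>c u - c v\<bar>"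
proof (induction N arbitrary: c rule: less_induct)
  case (less N c)
  have finM: "finite (Mset n c)" unfolding Mset_def by auto
  show ?case
  proof (cases "Mset n c = {}")
    case True
    define S where "S = {v. v < n \<and> c v = 0}"
    have vals: "\<And>v. v < n \<Longrightarrow> c v = 0 \<or> c v = 1"
    proof -
      fix v assume "v < n"
      hence "c v \<notin> {0<..<1}" using True unfolding Mset_def by auto
      thus "c v = 0 \<or> c v = 1" using less.prems(2) \<open>v < n\<close> by force
    qed
    have SV: "S \<subseteq> V n" unfolding S_def V_def by auto
    have "S \<inter> T = A"
    proof
      show "S \<inter> T \<subseteq> A" using less.prems(4) unfolding S_def by force
      show "A \<subseteq> S \<inter> T" using less.prems(3) AT unfolding S_def V_def by auto
    qed
    hence "delta n S \<in> T_cuts n T" using SV AT unfolding T_cuts_def by auto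
    hence pin: "chi (delta n S) \<in> P_Tcut n T" unfolding P_Tcut_def by (simp add: hull_inc)
    show ?thesis
    proof (intro bexI[OF _ pin] allI impI)
      fix u v assume uv: "u < n" "v < n" "u \<noteq> v"
      show "chi (delta n S) {u, v} \<le> \<bar>c u - c v\<bar>"
        using chi_delta_pair[OF uv, of S] vals[OF uv(1)] vals[OF uv(2)] uv unfolding S_def by auto
    qed
  next
    case False
    define t where "t = Min (Mset n c)"
    have tM: "t \<in> Mset n c" unfolding t_def using finM False by simp
    have tmin: "\<And>x. x \<in> Mset n c \<Longrightarrow> t \<le> x" unfolding t_def using finM by simp
    have t01: "0 < t" "t < 1" using tM unfolding Mset_def by auto
    define M2 where "M2 = (insert 1 (c ` {..<n})) \<inter> {t<..}"
    have finM2: "finite M2" unfolding M2_def by auto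
    have oneM2: "1 \<in> M2" unfolding M2_def using t01 by auto
    define t2 where "t2 = Min M2"
    have t2M: "t2 \<in> M2" unfolding t2_def using finM2 oneM2 by (metis Min_in empty_iff)
    have t2min: "\<And>x. x \<in> M2 \<Longrightarrow> t2 \<le> x" unfolding t2_def using finM2 by simp
    have tt2: "t < t2" "t2 \<le> 1" using t2M t2min[OF oneM2] unfolding M2_def by auto
    define al where "al = (t2 - t) / t2"
    have alp: "(1 - al) * t2 = t" "0 \<le> al" "al \<le> 1" using t01 tt2 unfolding al_def
      by (auto simp: field_simps)
    define c1 where "c1 v = (if c v = t then 0 else c v)" for v
    define c2 where "c2 v = (if c v = t then t2 else c v)" for v
    have cval: "\<And>v. v < n \<Longrightarrow> c v = 0 \<or> c v = t \<or> c v \<ge> t2"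
    proof -
      fix v assume v: "v < n"
      show "c v = 0 \<or> c v = t \<or> c v \<ge> t2"
      proof (cases "c v > t")
        case True
        hence "c v \<in> M2" unfolding M2_def using v by auto
        thus ?thesis using t2min by auto
      next
        case False
        moreover have "c v \<ge> 0" "c v \<le> 1" using less.prems(2) v by auto
        moreover have "c v < t \<Longrightarrow> c v \<notin> Mset n c" using tmin by force
        ultimately show ?thesis unfolding Mset_def using v t01 by force
      qed
    qed
    have M1sub: "Mset n c1 \<subseteq> Mset n c - {t}"
      unfolding Mset_def c1_def by auto
    have M2sub: "Mset n c2 \<subseteq> Mset n c - {t}"
    proof
      fix x assume x: "x \<in> Mset n c2"
      then obtain v where v: "v < n" "x = c2 v" "0 < x" "x < 1" unfolding Mset_def by auto
      show "x \<in> Mset n c - {t}"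
      proof (cases "c v = t")
        case True
        hence "x = t2" using v unfolding c2_def by simp
        hence "t2 \<in> c ` {..<n}" using t2M v unfolding M2_def by auto
        thus ?thesis using \<open>x = t2\<close> v tt2 unfolding Mset_def by auto
      next
        case False then show ?thesis using v unfolding Mset_def c2_def by auto
      qed
    qed
    have lt1: "card (Mset n c1) < N"
      using less.prems(1) M1sub tM finM
      by (metis card_Diff1_less card_mono finite_Diff le_less_trans)
    have lt2: "card (Mset n c2) < N"
      using less.prems(1) M2sub tM finM
      by (metis card_Diff1_less card_mono finite_Diff le_less_trans)
    have pr1: "\<forall>v<n. 0 \<le> c1 v \<and> c1 v \<le> 1" "\<forall>a\<in>A. c1 a = 0" "\<forall>b\<in>T-A. c1 b = 1"
      using less.prems(2-4) t01 unfolding c1_def by auto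
    have pr2: "\<forall>v<n. 0 \<le> c2 v \<and> c2 v \<le> 1" "\<forall>a\<in>A. c2 a = 0" "\<forall>b\<in>T-A. c2 b = 1"
      using less.prems(2-4) t01 tt2 unfolding c2_def by auto
    obtain p1 where p1: "p1 \<in> P_Tcut n T" "\<forall>u v. u<n \<longrightarrow> v<n \<longrightarrow> u\<noteq>v \<longrightarrow> p1 {u,v} \<le> \<bar>c1 u - c1 v\<bar>"
      using less.IH[OF lt1 refl pr1] by blast
    obtain p2 where p2: "p2 \<in> P_Tcut n T" "\<forall>u v. u<n \<longrightarrow> v<n \<longrightarrow> u\<noteq>v \<longrightarrow> p2 {u,v} \<le> \<bar>c2 u - c2 v\<bar>"
      using less.IH[OF lt2 refl pr2] by blast
    let ?p = "al *\<^sub>R p1 + (1 - al) *\<^sub>R p2"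
    have pin: "?p \<in> P_Tcut n T"
      using convex_P_Tcut p1(1) p2(1) alp unfolding convex_def by auto
    show ?thesis
    proof (intro bexI[OF _ pin] allI impI)
      fix u v assume uv: "u < n" "v < n" "u \<noteq> v"
      have "?p {u,v} = al * p1 {u,v} + (1 - al) * p2 {u,v}" by (simp add: scaleR_fun_def)
      also have "\<dots> \<le> al * \<bar>c1 u - c1 v\<bar> + (1 - al) * \<bar>c2 u - c2 v\<bar>"
        using p1(2) p2(2) uv alp by (intro add_mono mult_left_mono) auto
      also have "\<dots> = \<bar>c u - c v\<bar>"
        unfolding c1_def c2_def
        by (rule abs_identity[symmetric, OF t01(1) tt2(1) alp cval[OF uv(1)] cval[OF uv(2)]])
      finally show "?p {u,v} \<le> \<bar>c u - c v\<bar>" .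
    qed
  qed
qed

lemma level:
  assumes "A \<subseteq> T" "T \<subseteq> V n" "odd (card A)"
    "\<forall>v<n. 0 \<le> c v \<and> c v \<le> 1" "\<forall>a\<in>A. c a = 0" "\<forall>b\<in>T-A. c b = 1"
  shows "\<exists>p\<in>P_Tcut n T. \<forall>u v. u<n \<longrightarrow> v<n \<longrightarrow> u\<noteq>v \<longrightarrow> p {u,v} \<le> \<bar>c u - c v\<bar>"
  using level_aux[OF assms(1-3) refl assms(4-6)] .



lemma fun_sum_apply: "(\<Sum>j\<in>J. (f j :: 'a \<Rightarrow> 'b::comm_monoid_add)) x = (\<Sum>j\<in>J. f j x)"
  by (induction J rule: infinite_finite_induct) (auto simp: zero_fun_def plus_fun_def)

definition dl :: "nat \<Rightarrow> nat \<Rightarrow> real" where "dl k = (\<lambda>i. if i = k then 1 else 0)"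

lemma lin_dl: "k < d \<Longrightarrow> lin d (dl k) y = y k"
proof -
  assume k: "k < d"
  have "(\<lambda>i. dl k i * y i) = (\<lambda>i. if i = k then y k else 0)" unfolding dl_def by auto
  have "(\<Sum>i<d. dl k i * y i) = (\<Sum>i<d. if i = k then y k else 0)"
    by (rule sum.cong) (auto simp: dl_def)
  also have "\<dots> = y k" using k by simp
  finally show ?thesis unfolding lin_def .
qed

lemma lin_add: "lin d (a + b) y = lin d a y + lin d b y"
  unfolding lin_def by (simp add: algebra_simps sum.distrib)
lemma lin_minus: "lin d (a - b) y = lin d a y - lin d b y"
  unfolding lin_def by (simp add: algebra_simps sum_subtractf)
lemma lin_uminus: "lin d (- a) y = - lin d a y"
  unfolding lin_def by (simp add: sum_negf)
lemma lin_sum: "lin d (\<Sum>j\<in>J. a j) y = (\<Sum>j\<in>J. lin d (a j) y)"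
  unfolding lin_def fun_sum_apply by (simp add: sum_distrib_right sum.swap[of _ J])

definition code :: "nat \<Rightarrow> nat \<Rightarrow> nat \<Rightarrow> nat" where
  "code t a b = prod_encode (t, prod_encode (a, b))"

definition xi where "xi u v = code 0 u v"
definition li where "li A = code 1 (set_encode A) 0"
definition pii where "pii A v = code 2 (set_encode A) v"
definition zi where "zi A u v = code 3 (set_encode A) (prod_encode (u, v))"

definition AA :: "nat set \<Rightarrow> nat set set" where "AA T = {A. A \<subseteq> T \<and> odd (card A)}"
definition Pr :: "nat \<Rightarrow> (nat \<times> nat) set" where "Pr n = {(u,v). u < v \<and> v < n}"

lemma finite_Pr: "finite (Pr n)"
  by (rule finite_subset[of _ "{..<n} \<times> {..<n}"]) (auto simp: Pr_def)

lemma finite_AA: "finite T \<Longrightarrow> finite (AA T)"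
  unfolding AA_def by (rule finite_subset[of _ "Pow T"]) auto

definition CD :: "nat \<Rightarrow> nat set \<Rightarrow> nat set" where
  "CD n T = (\<lambda>(u,v). xi u v) ` Pr n \<union> li ` AA T \<union> (\<lambda>(A,v). pii A v) ` (AA T \<times> {..<n})
      \<union> (\<lambda>(A,(u,v)). zi A u v) ` (AA T \<times> Pr n)"

definition dd :: "nat \<Rightarrow> nat set \<Rightarrow> nat" where "dd n T = Suc (Max (insert 0 (CD n T)))"

lemma finite_CD: "finite T \<Longrightarrow> finite (CD n T)"
  unfolding CD_def using finite_Pr finite_AA by auto

lemma CD_lt: "finite T \<Longrightarrow> k \<in> CD n T \<Longrightarrow> k < dd n T"
  unfolding dd_def using finite_CD by (simp add: le_imp_less_Suc)

lemma xi_lt: "finite T \<Longrightarrow> u < v \<Longrightarrow> v < n \<Longrightarrow> xi u v < dd n T"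
  by (rule CD_lt) (auto simp: CD_def Pr_def)
lemma li_lt: "finite T \<Longrightarrow> A \<in> AA T \<Longrightarrow> li A < dd n T"
  by (rule CD_lt) (auto simp: CD_def)
lemma pii_lt: "finite T \<Longrightarrow> A \<in> AA T \<Longrightarrow> v < n \<Longrightarrow> pii A v < dd n T"
proof (rule CD_lt)
  assume "A \<in> AA T" "v < n"
  hence "pii A v \<in> (\<lambda>(A,v). pii A v) ` (AA T \<times> {..<n})" by (intro image_eqI[where x="(A,v)"]) auto
  thus "pii A v \<in> CD n T" unfolding CD_def by blast
qed
lemma zi_lt: "finite T \<Longrightarrow> A \<in> AA T \<Longrightarrow> u < v \<Longrightarrow> v < n \<Longrightarrow> zi A u v < dd n T"
proof (rule CD_lt)
  assume "A \<in> AA T" "u < v" "v < n"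
  hence "zi A u v \<in> (\<lambda>(A,(u,v)). zi A u v) ` (AA T \<times> Pr n)"
    by (intro image_eqI[where x="(A,(u,v))"]) (auto simp: Pr_def)
  thus "zi A u v \<in> CD n T" unfolding CD_def by blast
qed

definition C1 where "C1 (n::nat) T = (\<lambda>A. (- dl (li A), 0::real)) ` AA T"
definition C2 where "C2 (n::nat) T = {((\<Sum>A\<in>AA T. dl (li A)), 1::real), (- (\<Sum>A\<in>AA T. dl (li A)), -1)}"
definition C3 where "C3 (n::nat) T = (\<lambda>(A,a). (dl (pii A a), 0::real)) ` Sigma (AA T) (\<lambda>A. A)
   \<union> (\<lambda>(A,a). (- dl (pii A a), 0::real)) ` Sigma (AA T) (\<lambda>A. A)"
definition C4 where "C4 (n::nat) T = (\<lambda>(A,b). (dl (li A) - dl (pii A b), 0::real)) ` Sigma (AA T) (\<lambda>A. T - A)"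
definition C5 where "C5 (n::nat) T = (\<lambda>(A,(u,v)). (dl (pii A u) - dl (pii A v) - dl (zi A u v), 0::real)) ` (AA T \<times> Pr n)
   \<union> (\<lambda>(A,(u,v)). (dl (pii A v) - dl (pii A u) - dl (zi A u v), 0::real)) ` (AA T \<times> Pr n)"
definition C6 where "C6 (n::nat) T = (\<lambda>(u,v). ((\<Sum>A\<in>AA T. dl (zi A u v)) - dl (xi u v), 0::real)) ` Pr n"

definition CS where "CS n T = C1 n T \<union> C2 n T \<union> C3 n T \<union> C4 n T \<union> C5 n T \<union> C6 n T"

definition QQ where "QQ n T = PQ (dd n T) (CS n T)"

lemma Qchar:
  assumes TV: "T \<subseteq> V n"
  shows "y \<in> QQ n T \<longleftrightarrow> (\<forall>i\<ge>dd n T. y i = 0) \<and>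
    (\<forall>A\<in>AA T. y (li A) \<ge> 0) \<and> (\<Sum>A\<in>AA T. y (li A)) = 1 \<and>
    (\<forall>A\<in>AA T. \<forall>a\<in>A. y (pii A a) = 0) \<and>
    (\<forall>A\<in>AA T. \<forall>b\<in>T-A. y (li A) \<le> y (pii A b)) \<and>
    (\<forall>A\<in>AA T. \<forall>u v. u < v \<longrightarrow> v < n \<longrightarrow> \<bar>y (pii A u) - y (pii A v)\<bar> \<le> y (zi A u v)) \<and>
    (\<forall>u v. u < v \<longrightarrow> v < n \<longrightarrow> (\<Sum>A\<in>AA T. y (zi A u v)) \<le> y (xi u v))"
proof -
  have finT: "finite T" using TV unfolding V_def using finite_subset by blast
  let ?d = "dd n T"
  have AT: "\<And>A. A \<in> AA T \<Longrightarrow> A \<subseteq> T" unfolding AA_def by auto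
  have TVn: "\<And>a. a \<in> T \<Longrightarrow> a < n" using TV unfolding V_def by auto
  have l1: "(\<forall>(a,b)\<in>C1 n T. lin ?d a y \<le> b) \<longleftrightarrow> (\<forall>A\<in>AA T. y (li A) \<ge> 0)"
    unfolding C1_def by (auto simp: lin_uminus lin_dl li_lt[OF finT])
  have s2: "lin ?d (\<Sum>A\<in>AA T. dl (li A)) y = (\<Sum>A\<in>AA T. y (li A))"
    by (simp add: lin_sum lin_dl li_lt[OF finT])
  have l2: "(\<forall>(a,b)\<in>C2 n T. lin ?d a y \<le> b) \<longleftrightarrow> (\<Sum>A\<in>AA T. y (li A)) = 1"
    unfolding C2_def by (auto simp: lin_uminus s2)
  have pA: "\<And>A a. A \<in> AA T \<Longrightarrow> a \<in> T \<Longrightarrow> lin ?d (dl (pii A a)) y = y (pii A a)"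
    using TVn by (simp add: lin_dl pii_lt[OF finT])
  have pA': "\<And>A a. A \<in> AA T \<Longrightarrow> a \<in> A \<Longrightarrow> lin ?d (dl (pii A a)) y = y (pii A a)"
    using pA AT by blast
  have l3: "(\<forall>(a,b)\<in>C3 n T. lin ?d a y \<le> b) \<longleftrightarrow> (\<forall>A\<in>AA T. \<forall>a\<in>A. y (pii A a) = 0)"
  proof -
    have "(\<forall>(a,b)\<in>C3 n T. lin ?d a y \<le> b) \<longleftrightarrow> (\<forall>A\<in>AA T. \<forall>a\<in>A. y (pii A a) \<le> 0 \<and> - y (pii A a) \<le> 0)"
    proof
      assume H: "\<forall>(a,b)\<in>C3 n T. lin ?d a y \<le> b"
      show "\<forall>A\<in>AA T. \<forall>a\<in>A. y (pii A a) \<le> 0 \<and> - y (pii A a) \<le> 0"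
      proof (intro ballI)
        fix A a assume Aa: "A \<in> AA T" "a \<in> A"
        have "(dl (pii A a), 0) \<in> C3 n T" "(- dl (pii A a), 0) \<in> C3 n T"
          unfolding C3_def using Aa by (auto intro!: image_eqI[where x="(A,a)"])
        thus "y (pii A a) \<le> 0 \<and> - y (pii A a) \<le> 0" using H pA'[OF Aa] by (force simp: lin_uminus)
      qed
    next
      assume "\<forall>A\<in>AA T. \<forall>a\<in>A. y (pii A a) \<le> 0 \<and> - y (pii A a) \<le> 0"
      thus "\<forall>(a,b)\<in>C3 n T. lin ?d a y \<le> b" unfolding C3_def by (auto simp: lin_uminus pA')
    qed
    thus ?thesis by force
  qed
  have l4: "(\<forall>(a,b)\<in>C4 n T. lin ?d a y \<le> b) \<longleftrightarrow> (\<forall>A\<in>AA T. \<forall>b\<in>T-A. y (li A) \<le> y (pii A b))"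
    unfolding C4_def by (auto simp: lin_minus lin_dl pA li_lt[OF finT])
  have l5: "(\<forall>(a,b)\<in>C5 n T. lin ?d a y \<le> b) \<longleftrightarrow>
      (\<forall>A\<in>AA T. \<forall>u v. u < v \<longrightarrow> v < n \<longrightarrow> \<bar>y (pii A u) - y (pii A v)\<bar> \<le> y (zi A u v))"
  proof
    assume H: "\<forall>(a,b)\<in>C5 n T. lin ?d a y \<le> b"
    show "\<forall>A\<in>AA T. \<forall>u v. u < v \<longrightarrow> v < n \<longrightarrow> \<bar>y (pii A u) - y (pii A v)\<bar> \<le> y (zi A u v)"
    proof (intro ballI allI impI)
      fix A u v assume A: "A \<in> AA T" and uv: "u < v" "v < n"
      have "(dl (pii A u) - dl (pii A v) - dl (zi A u v), 0) \<in> C5 n T"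
           "(dl (pii A v) - dl (pii A u) - dl (zi A u v), 0) \<in> C5 n T"
        unfolding C5_def using A uv by (auto intro!: image_eqI[where x="(A,(u,v))"] simp: Pr_def)
      thus "\<bar>y (pii A u) - y (pii A v)\<bar> \<le> y (zi A u v)"
        using H A uv by (force simp: lin_minus lin_dl pii_lt[OF finT] zi_lt[OF finT] abs_le_iff)
    qed
  next
    assume H: "\<forall>A\<in>AA T. \<forall>u v. u < v \<longrightarrow> v < n \<longrightarrow> \<bar>y (pii A u) - y (pii A v)\<bar> \<le> y (zi A u v)"
    show "\<forall>(a,b)\<in>C5 n T. lin ?d a y \<le> b"
      unfolding C5_def Pr_def using H
      by (auto simp: lin_minus lin_dl pii_lt[OF finT] zi_lt[OF finT] abs_le_iff)
  qed
  have s6: "\<And>u v. u < v \<Longrightarrow> v < n \<Longrightarrow> lin ?d (\<Sum>A\<in>AA T. dl (zi A u v)) y = (\<Sum>A\<in>AA T. y (zi A u v))"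
    by (simp add: lin_sum lin_dl zi_lt[OF finT])
  have l6: "(\<forall>(a,b)\<in>C6 n T. lin ?d a y \<le> b) \<longleftrightarrow>
      (\<forall>u v. u < v \<longrightarrow> v < n \<longrightarrow> (\<Sum>A\<in>AA T. y (zi A u v)) \<le> y (xi u v))"
    unfolding C6_def Pr_def by (auto simp: lin_minus lin_dl xi_lt[OF finT] s6)
  show ?thesis
    unfolding QQ_def PQ_def CS_def mem_Collect_eq ball_Un l1 l2 l3 l4 l5 l6 conj_assoc by (rule refl)
qed



definition MM :: "nat set \<Rightarrow> nat \<Rightarrow> real" where "MM e = dl (xi (Min e) (Max e))"

lemma E_cases: "e \<in> E n \<Longrightarrow> \<exists>u v. u < v \<and> v < n \<and> e = {u,v}"
  unfolding E_def V_def
  by (auto, metis insert_commute linorder_neqE_nat)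

lemma Min_Max_pair: "u < (v::nat) \<Longrightarrow> Min {u,v} = u \<and> Max {u,v} = v"
  by auto

lemma lin_map_pair:
  assumes "finite T" "u < v" "v < n"
  shows "lin_map (E n) (dd n T) MM y {u,v} = y (xi u v)"
proof -
  have "{u,v} \<in> E n" using assms E_pair by auto
  thus ?thesis unfolding lin_map_def MM_def using Min_Max_pair[OF assms(2)] lin_dl[OF xi_lt[OF assms]]
    by (simp add: lin_def)
qed

lemma lin_map_out: "e \<notin> E n \<Longrightarrow> lin_map (E n) d M y e = 0"
  unfolding lin_map_def by simp

definition mk :: "nat \<Rightarrow> (nat \<Rightarrow> nat \<Rightarrow> nat \<Rightarrow> real) \<Rightarrow> nat \<Rightarrow> real" where
  "mk d G i = (if i < d then (case prod_decode i of (t,w) \<Rightarrow> case prod_decode w of (a,b) \<Rightarrow> G t a b) else 0)"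

lemma mk_code: "code t a b < d \<Longrightarrow> mk d G (code t a b) = G t a b"
  unfolding mk_def code_def by simp

lemma mk_out: "d \<le> i \<Longrightarrow> mk d G i = 0"
  unfolding mk_def by simp

lemma P_Tcut_zero: "p \<in> P_Tcut n T \<Longrightarrow> e \<notin> E n \<Longrightarrow> p e = 0"
proof -
  assume p: "p \<in> P_Tcut n T" and e: "e \<notin> E n"
  have "P_Tcut n T \<subseteq> {f. \<forall>e. e \<notin> E n \<longrightarrow> f e = 0}"
    unfolding P_Tcut_def
  proof (rule hull_minimal)
    show "chi ` T_cuts n T \<subseteq> {f. \<forall>e. e \<notin> E n \<longrightarrow> f e = 0}"
      unfolding T_cuts_def chi_def delta_def by auto
    show "convex {f. \<forall>e. e \<notin> E n \<longrightarrow> f (e::nat set) = (0::real)}"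
      unfolding convex_def by auto
  qed
  thus ?thesis using p e by auto
qed

definition clip :: "real \<Rightarrow> real" where "clip x = max 0 (min 1 x)"

lemma clip_lip: "\<bar>clip x - clip y\<bar> \<le> \<bar>x - y\<bar>"
  unfolding clip_def by (auto simp: abs_if max_def min_def)

lemma finite_T: "T \<subseteq> V n \<Longrightarrow> finite T"
  unfolding V_def using finite_subset by blast

lemma image_sub_dom:
  assumes TV: "T \<subseteq> V n"
  shows "lin_map (E n) (dd n T) MM ` QQ n T \<subseteq> dom_P n (P_Tcut n T)"
proof
  fix X assume "X \<in> lin_map (E n) (dd n T) MM ` QQ n T"
  then obtain y where y: "y \<in> QQ n T" and X: "X = lin_map (E n) (dd n T) MM y" by auto
  have finT: "finite T" using finite_T[OF TV] .
  note Q = y[unfolded Qchar[OF TV]]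
  define lam where "lam A = y (li A)" for A
  define AP where "AP = {A \<in> AA T. lam A > 0}"
  have finAA: "finite (AA T)" using finite_AA[OF finT] .
  have finAP: "finite AP" unfolding AP_def using finAA by auto
  have lam0: "\<And>A. A \<in> AA T \<Longrightarrow> lam A \<ge> 0" using Q unfolding lam_def by auto
  have sumAP: "(\<Sum>A\<in>AP. lam A) = 1"
  proof -
    have "(\<Sum>A\<in>AP. lam A) = (\<Sum>A\<in>AA T. lam A)"
      using finAA lam0 unfolding AP_def by (intro sum.mono_neutral_left) force+
    thus ?thesis using Q unfolding lam_def by simp
  qed
  define cc where "cc A v = clip (y (pii A v) / lam A)" for A v
  have "\<forall>A\<in>AP. \<exists>p\<in>P_Tcut n T. \<forall>u v. u<n \<longrightarrow> v<n \<longrightarrow> u\<noteq>v \<longrightarrow> p {u,v} \<le> \<bar>cc A u - cc A v\<bar>"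
  proof
    fix A assume A: "A \<in> AP"
    hence AA: "A \<subseteq> T" "odd (card A)" and lp: "lam A > 0" unfolding AP_def AA_def by auto
    show "\<exists>p\<in>P_Tcut n T. \<forall>u v. u<n \<longrightarrow> v<n \<longrightarrow> u\<noteq>v \<longrightarrow> p {u,v} \<le> \<bar>cc A u - cc A v\<bar>"
    proof (rule level[OF AA(1) TV AA(2)])
      show "\<forall>v<n. 0 \<le> cc A v \<and> cc A v \<le> 1" unfolding cc_def clip_def by auto
      show "\<forall>a\<in>A. cc A a = 0" using Q A unfolding cc_def clip_def AP_def by auto
      show "\<forall>b\<in>T-A. cc A b = 1"
      proof
        fix b assume b: "b \<in> T - A"
        have "lam A \<le> y (pii A b)" using Q A b unfolding AP_def lam_def by auto
        hence "1 \<le> y (pii A b) / lam A" using lp by simp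
        thus "cc A b = 1" unfolding cc_def clip_def by auto
      qed
    qed
  qed
  then obtain pA where pA: "\<And>A. A \<in> AP \<Longrightarrow> pA A \<in> P_Tcut n T"
    "\<And>A u v. A \<in> AP \<Longrightarrow> u<n \<Longrightarrow> v<n \<Longrightarrow> u\<noteq>v \<Longrightarrow> pA A {u,v} \<le> \<bar>cc A u - cc A v\<bar>"
    by metis
  define p where "p = (\<Sum>A\<in>AP. lam A *\<^sub>R pA A)"
  have pP: "p \<in> P_Tcut n T"
    unfolding p_def using finAP convex_P_Tcut sumAP pA(1) lam0 unfolding AP_def
    by (intro convex_sum) auto
  define r where "r = X - p"
  have Xpr: "X = p + r" unfolding r_def by simp
  have r0: "\<forall>e. e \<notin> E n \<longrightarrow> r e = 0"
    using P_Tcut_zero[OF pP] lin_map_out unfolding r_def X by simp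
  have rpos: "\<forall>e\<in>E n. r e \<ge> 0"
  proof
    fix e assume e: "e \<in> E n"
    then obtain u v where uv: "u < v" "v < n" "e = {u,v}" using E_cases by blast
    have pe: "p e = (\<Sum>A\<in>AP. lam A * pA A {u,v})" unfolding p_def fun_sum_apply uv(3) by simp
    have "\<And>A. A \<in> AP \<Longrightarrow> lam A * pA A {u,v} \<le> y (zi A u v)"
    proof -
      fix A assume A: "A \<in> AP"
      have lp: "lam A > 0" using A unfolding AP_def by auto
      have "lam A * pA A {u,v} \<le> lam A * \<bar>cc A u - cc A v\<bar>"
        using pA(2)[OF A, of u v] uv lp by (intro mult_left_mono) auto
      also have "\<dots> \<le> lam A * \<bar>y (pii A u) / lam A - y (pii A v) / lam A\<bar>"
        unfolding cc_def using lp clip_lip by (intro mult_left_mono) auto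
      also have "\<dots> = \<bar>y (pii A u) - y (pii A v)\<bar>"
        using lp by (simp add: abs_mult[symmetric] diff_divide_distrib[symmetric])
      also have "\<dots> \<le> y (zi A u v)" using Q A uv unfolding AP_def by auto
      finally show "lam A * pA A {u,v} \<le> y (zi A u v)" .
    qed
    hence "p e \<le> (\<Sum>A\<in>AP. y (zi A u v))" unfolding pe by (rule sum_mono)
    also have "\<dots> \<le> (\<Sum>A\<in>AA T. y (zi A u v))"
    proof (rule sum_mono2[OF finAA])
      show "AP \<subseteq> AA T" unfolding AP_def by auto
      fix A assume "A \<in> AA T - AP"
      thus "0 \<le> y (zi A u v)" using Q uv by (meson DiffD1 abs_ge_zero order_trans)
    qed
    also have "\<dots> \<le> y (xi u v)" using Q uv by auto
    also have "\<dots> = X e" unfolding X uv(3) using lin_map_pair[OF finT uv(1,2)] by simp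
    finally show "r e \<ge> 0" unfolding r_def by simp
  qed
  show "X \<in> dom_P n (P_Tcut n T)"
    unfolding dom_P_def using Xpr pP rpos r0 by blast
qed



lemma lin_map_comb: "lin_map I d M (u *\<^sub>R y + v *\<^sub>R z) = u *\<^sub>R lin_map I d M y + v *\<^sub>R lin_map I d M z"
  unfolding lin_map_def by (auto simp: fun_eq_iff sum.distrib sum_distrib_left algebra_simps)

lemma convex_image_QQ: "convex (lin_map (E n) (dd n T) MM ` QQ n T)"
  unfolding convex_def
proof (intro ballI allI impI)
  fix f g and u v :: real
  assume f: "f \<in> lin_map (E n) (dd n T) MM ` QQ n T" and g: "g \<in> lin_map (E n) (dd n T) MM ` QQ n T"
    and uv: "0 \<le> u" "0 \<le> v" "u + v = 1"
  obtain y1 where y1: "y1 \<in> QQ n T" "f = lin_map (E n) (dd n T) MM y1" using f by auto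
  obtain y2 where y2: "y2 \<in> QQ n T" "g = lin_map (E n) (dd n T) MM y2" using g by auto
  have "u *\<^sub>R y1 + v *\<^sub>R y2 \<in> QQ n T" using convex_PQ y1 y2 uv unfolding QQ_def convex_def by blast
  moreover have "u *\<^sub>R f + v *\<^sub>R g = lin_map (E n) (dd n T) MM (u *\<^sub>R y1 + v *\<^sub>R y2)"
    using y1 y2 by (simp add: lin_map_comb)
  ultimately show "u *\<^sub>R f + v *\<^sub>R g \<in> lin_map (E n) (dd n T) MM ` QQ n T" by blast
qed

lemma cut_in_image:
  assumes TV: "T \<subseteq> V n" and S: "S \<subseteq> V n" "odd (card (S \<inter> T))"
  shows "chi (delta n S) \<in> lin_map (E n) (dd n T) MM ` QQ n T"
proof -
  have finT: "finite T" using finite_T[OF TV] .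
  define A0 where "A0 = S \<inter> T"
  define F where "F = delta n S"
  have A0: "A0 \<in> AA T" unfolding AA_def A0_def using S by auto
  have finA: "\<And>A. A \<in> AA T \<Longrightarrow> finite A" unfolding AA_def using finT finite_subset by blast
  define G where "G (t::nat) a b = (if t = 0 then chi F {a,b}
      else if t = 1 then (if set_decode a = A0 then 1 else 0)
      else if t = 2 then (if set_decode a = A0 \<and> b \<notin> S then 1 else 0)
      else if t = 3 then (if set_decode a = A0 then (case prod_decode b of (u,v) \<Rightarrow> chi F {u,v}) else 0)
      else 0)" for t a b
  define y where "y = mk (dd n T) G"
  have yl: "\<And>A. A \<in> AA T \<Longrightarrow> y (li A) = (if A = A0 then 1 else 0)"
    unfolding y_def using li_lt[OF finT] finA by (simp add: li_def mk_code G_def)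
  have yp: "\<And>A v. A \<in> AA T \<Longrightarrow> v < n \<Longrightarrow> y (pii A v) = (if A = A0 \<and> v \<notin> S then 1 else 0)"
  proof -
    fix A v assume "A \<in> AA T" "v < n"
    thus "y (pii A v) = (if A = A0 \<and> v \<notin> S then 1 else 0)"
      unfolding y_def using pii_lt[OF finT, of A v] finA[of A] by (simp add: pii_def mk_code G_def)
  qed
  have yz: "\<And>A u v. A \<in> AA T \<Longrightarrow> u < v \<Longrightarrow> v < n \<Longrightarrow> y (zi A u v) = (if A = A0 then chi F {u,v} else 0)"
  proof -
    fix A u v assume "A \<in> AA T" "u < v" "v < n"
    thus "y (zi A u v) = (if A = A0 then chi F {u,v} else 0)"
      unfolding y_def using zi_lt[OF finT, of A u v] finA[of A] by (simp add: zi_def mk_code G_def)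
  qed
  have yx: "\<And>u v. u < v \<Longrightarrow> v < n \<Longrightarrow> y (xi u v) = chi F {u,v}"
  proof -
    fix u v assume "u < v" "v < n"
    thus "y (xi u v) = chi F {u,v}"
      unfolding y_def using xi_lt[OF finT, of u v] by (simp add: xi_def mk_code G_def)
  qed
  have chiF: "\<And>u v. u < v \<Longrightarrow> v < n \<Longrightarrow> chi F {u,v} = \<bar>(if u \<notin> S then 1 else 0) - (if v \<notin> S then 1 else 0)\<bar>"
  proof -
    fix u v :: nat assume "u < v" "v < n"
    thus "chi F {u,v} = \<bar>(if u \<notin> S then 1 else 0) - (if v \<notin> S then 1 else 0)\<bar>"
      unfolding F_def using chi_delta_pair[of u n v S] by auto
  qed
  have yQ: "y \<in> QQ n T"
    unfolding Qchar[OF TV]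
  proof (intro conjI allI impI ballI)
    fix i assume "dd n T \<le> i" thus "y i = 0" unfolding y_def by (rule mk_out)
  next
    fix A assume "A \<in> AA T" thus "0 \<le> y (li A)" using yl by simp
  next
    have "(\<Sum>A\<in>AA T. y (li A)) = (\<Sum>A\<in>AA T. if A = A0 then 1 else 0)" using yl by simp
    also have "\<dots> = 1" using A0 finite_AA[OF finT] by simp
    finally show "(\<Sum>A\<in>AA T. y (li A)) = 1" .
  next
    fix A a assume A: "A \<in> AA T" and a: "a \<in> A"
    have "a < n" using A a TV unfolding AA_def V_def by auto
    thus "y (pii A a) = 0" using yp[OF A] a unfolding A0_def by auto
  next
    fix A b assume A: "A \<in> AA T" and b: "b \<in> T - A"
    have "b < n" using b TV unfolding V_def by auto
    thus "y (li A) \<le> y (pii A b)" using yp[OF A] yl[OF A] b unfolding A0_def by auto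
  next
    fix A u v assume A: "A \<in> AA T" and uv: "u < v" "v < n"
    show "\<bar>y (pii A u) - y (pii A v)\<bar> \<le> y (zi A u v)"
      using yp[OF A] yz[OF A uv] chiF[OF uv] uv by auto
  next
    fix u v assume uv: "u < v" "v < n"
    have "(\<Sum>A\<in>AA T. y (zi A u v)) = (\<Sum>A\<in>AA T. if A = A0 then chi F {u,v} else 0)"
      using yz uv by simp
    also have "\<dots> = chi F {u,v}" using A0 finite_AA[OF finT] by simp
    finally show "(\<Sum>A\<in>AA T. y (zi A u v)) \<le> y (xi u v)" using yx[OF uv] by simp
  qed
  have "lin_map (E n) (dd n T) MM y = chi F"
  proof
    fix e show "lin_map (E n) (dd n T) MM y e = chi F e"
    proof (cases "e \<in> E n")
      case True
      then obtain u v where uv: "u < v" "v < n" "e = {u,v}" using E_cases by blast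
      thus ?thesis using lin_map_pair[OF finT uv(1,2)] yx[OF uv(1,2)] by simp
    next
      case False
      thus ?thesis using lin_map_out[OF False] unfolding chi_def F_def delta_def by auto
    qed
  qed
  thus ?thesis using yQ unfolding F_def by (metis image_eqI)
qed

lemma P_sub_image:
  assumes TV: "T \<subseteq> V n"
  shows "P_Tcut n T \<subseteq> lin_map (E n) (dd n T) MM ` QQ n T"
  unfolding P_Tcut_def
proof (rule hull_minimal)
  show "chi ` T_cuts n T \<subseteq> lin_map (E n) (dd n T) MM ` QQ n T"
    unfolding T_cuts_def using cut_in_image[OF TV] by auto
  show "convex (lin_map (E n) (dd n T) MM ` QQ n T)" by (rule convex_image_QQ)
qed

lemma dom_sub_image:
  assumes TV: "T \<subseteq> V n"
  shows "dom_P n (P_Tcut n T) \<subseteq> lin_map (E n) (dd n T) MM ` QQ n T"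
proof
  fix X assume "X \<in> dom_P n (P_Tcut n T)"
  then obtain p r where X: "X = p + r" and p: "p \<in> P_Tcut n T"
    and rpos: "\<forall>e\<in>E n. r e \<ge> 0" and r0: "\<forall>e. e \<notin> E n \<longrightarrow> r e = 0"
    unfolding dom_P_def by blast
  have finT: "finite T" using finite_T[OF TV] .
  obtain y where yQ: "y \<in> QQ n T" and py: "p = lin_map (E n) (dd n T) MM y"
    using P_sub_image[OF TV] p by blast
  define H where "H (t::nat) a b = (if t = 0 \<and> a < b \<and> b < n then r {a,b} else 0)" for t a b
  define y' where "y' = y + mk (dd n T) H"
  note Q = yQ[unfolded Qchar[OF TV]]
  have y'l: "\<And>A. A \<in> AA T \<Longrightarrow> y' (li A) = y (li A)"
    unfolding y'_def using li_lt[OF finT] by (simp add: li_def mk_code H_def)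
  have y'p: "\<And>A v. A \<in> AA T \<Longrightarrow> v < n \<Longrightarrow> y' (pii A v) = y (pii A v)"
    unfolding y'_def using pii_lt[OF finT] by (simp add: pii_def mk_code H_def)
  have y'z: "\<And>A u v. A \<in> AA T \<Longrightarrow> u < v \<Longrightarrow> v < n \<Longrightarrow> y' (zi A u v) = y (zi A u v)"
    unfolding y'_def using zi_lt[OF finT] by (simp add: zi_def mk_code H_def)
  have y'x: "\<And>u v. u < v \<Longrightarrow> v < n \<Longrightarrow> y' (xi u v) = y (xi u v) + r {u,v}"
    unfolding y'_def using xi_lt[OF finT] by (simp add: xi_def mk_code H_def)
  have TVn: "\<And>a. a \<in> T \<Longrightarrow> a < n" using TV unfolding V_def by auto
  have AT: "\<And>A a. A \<in> AA T \<Longrightarrow> a \<in> A \<Longrightarrow> a < n" using TVn unfolding AA_def by auto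
  have y'Q: "y' \<in> QQ n T"
    unfolding Qchar[OF TV]
  proof (intro conjI allI impI ballI)
    fix i assume "dd n T \<le> i" thus "y' i = 0" unfolding y'_def using Q mk_out by simp
  next
    fix A assume "A \<in> AA T" thus "0 \<le> y' (li A)" using y'l Q by simp
  next
    show "(\<Sum>A\<in>AA T. y' (li A)) = 1" using y'l Q by simp
  next
    fix A a assume "A \<in> AA T" "a \<in> A" thus "y' (pii A a) = 0" using y'p Q AT by simp
  next
    fix A b assume "A \<in> AA T" "b \<in> T - A" thus "y' (li A) \<le> y' (pii A b)" using y'p y'l Q TVn by simp
  next
    fix A u v assume "A \<in> AA T" "u < v" "v < n"
    thus "\<bar>y' (pii A u) - y' (pii A v)\<bar> \<le> y' (zi A u v)" using y'p y'z Q by simp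
  next
    fix u v assume uv: "u < v" "v < n"
    have "(\<Sum>A\<in>AA T. y' (zi A u v)) = (\<Sum>A\<in>AA T. y (zi A u v))" using y'z uv by simp
    also have "\<dots> \<le> y (xi u v)" using Q uv by simp
    also have "\<dots> \<le> y' (xi u v)" using y'x[OF uv] rpos E_pair[of u n v] uv by simp
    finally show "(\<Sum>A\<in>AA T. y' (zi A u v)) \<le> y' (xi u v)" .
  qed
  have "lin_map (E n) (dd n T) MM y' = X"
  proof
    fix e show "lin_map (E n) (dd n T) MM y' e = X e"
    proof (cases "e \<in> E n")
      case True
      then obtain u v where uv: "u < v" "v < n" "e = {u,v}" using E_cases by blast
      thus ?thesis using lin_map_pair[OF finT uv(1,2), of y'] lin_map_pair[OF finT uv(1,2), of y]
          y'x[OF uv(1,2)] unfolding X py by simp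
    next
      case False
      thus ?thesis using lin_map_out[OF False] r0 unfolding X py by simp
    qed
  qed
  thus "X \<in> lin_map (E n) (dd n T) MM ` QQ n T" using y'Q by blast
qed



lemma dom_eq:
  assumes TV: "T \<subseteq> V n"
  shows "dom_P n (P_Tcut n T) = lin_map (E n) (dd n T) MM ` QQ n T"
  using dom_sub_image[OF TV] image_sub_dom[OF TV] by blast

lemma card_Pr: "card (Pr n) \<le> n * n"
proof -
  have "card (Pr n) \<le> card ({..<n} \<times> {..<n})"
    by (rule card_mono) (auto simp: Pr_def)
  thus ?thesis by (simp add: card_cartesian_product)
qed

lemma finite_CS: "finite T \<Longrightarrow> finite (CS n T)"
  unfolding CS_def C1_def C2_def C3_def C4_def C5_def C6_def
  using finite_AA finite_Pr
  by (auto intro!: finite_SigmaI finite_imageI dest: finite_AA simp: AA_def intro: finite_subset)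

lemma card_CS:
  assumes TV: "T \<subseteq> V n"
  shows "card (CS n T) \<le> card (AA T) + 2 + 2 * (card (AA T) * n) + card (AA T) * n
      + 2 * (card (AA T) * (n * n)) + n * n"
proof -
  have finT: "finite T" using finite_T[OF TV] .
  have finAA: "finite (AA T)" using finite_AA[OF finT] .
  let ?a = "card (AA T)"
  have sig1: "card (Sigma (AA T) (\<lambda>A. A)) \<le> ?a * n"
  proof -
    have "card (Sigma (AA T) (\<lambda>A. A)) \<le> card (AA T \<times> {..<n})"
      using TV finAA by (intro card_mono) (auto simp: AA_def V_def)
    thus ?thesis by (simp add: card_cartesian_product)
  qed
  have sig2: "card (Sigma (AA T) (\<lambda>A. T - A)) \<le> ?a * n"
  proof -
    have "card (Sigma (AA T) (\<lambda>A. T - A)) \<le> card (AA T \<times> {..<n})"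
      using TV finAA by (intro card_mono) (auto simp: AA_def V_def)
    thus ?thesis by (simp add: card_cartesian_product)
  qed
  have cp: "card (AA T \<times> Pr n) \<le> ?a * (n * n)"
    using card_Pr by (simp add: card_cartesian_product)
  have c1: "card (C1 n T) \<le> ?a" unfolding C1_def by (rule card_image_le[OF finAA])
  have c2: "card (C2 n T) \<le> 2" unfolding C2_def by (simp add: card_insert_le_m1)
  have c3: "card (C3 n T) \<le> 2 * (?a * n)"
  proof -
    have "card (C3 n T) \<le> card (Sigma (AA T) (\<lambda>A. A)) + card (Sigma (AA T) (\<lambda>A. A))"
      unfolding C3_def by (rule order_trans[OF card_Un_le add_mono[OF card_image_le card_image_le]])
        (use finAA finT in \<open>auto intro!: finite_SigmaI simp: AA_def dest: finite_subset\<close>)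
    thus ?thesis using sig1 by linarith
  qed
  have c4: "card (C4 n T) \<le> ?a * n"
  proof -
    have "card (C4 n T) \<le> card (Sigma (AA T) (\<lambda>A. T - A))"
      unfolding C4_def by (rule card_image_le) (use finAA finT in auto)
    thus ?thesis using sig2 by linarith
  qed
  have c5: "card (C5 n T) \<le> 2 * (?a * (n * n))"
  proof -
    have "card (C5 n T) \<le> card (AA T \<times> Pr n) + card (AA T \<times> Pr n)"
      unfolding C5_def by (rule order_trans[OF card_Un_le add_mono[OF card_image_le card_image_le]])
        (use finAA finite_Pr in auto)
    thus ?thesis using cp by linarith
  qed
  have c6: "card (C6 n T) \<le> n * n"
    unfolding C6_def using card_image_le[OF finite_Pr] card_Pr le_trans by blast
  have "card (CS n T) \<le> card (C1 n T) + card (C2 n T) + card (C3 n T) + card (C4 n T) + card (C5 n T) + card (C6 n T)"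
    unfolding CS_def
    using card_Un_le[of "C1 n T \<union> C2 n T \<union> C3 n T \<union> C4 n T \<union> C5 n T" "C6 n T"]
      card_Un_le[of "C1 n T \<union> C2 n T \<union> C3 n T \<union> C4 n T" "C5 n T"]
      card_Un_le[of "C1 n T \<union> C2 n T \<union> C3 n T" "C4 n T"]
      card_Un_le[of "C1 n T \<union> C2 n T" "C3 n T"]
      card_Un_le[of "C1 n T" "C2 n T"] by linarith
  thus ?thesis using c1 c2 c3 c4 c5 c6 by linarith
qed

lemma xc_le:
  assumes TV: "T \<subseteq> V n"
  shows "xc (E n) (dom_P n (P_Tcut n T)) \<le> card (CS n T)"
proof -
  have finT: "finite T" using finite_T[OF TV] .
  have "polyhedron_in (dd n T) (QQ n T)" unfolding QQ_def by (rule polyhedron_PQ[OF finite_CS[OF finT]])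
  hence "\<exists>d Q M. polyhedron_in d Q \<and> dom_P n (P_Tcut n T) = lin_map (E n) d M ` Q \<and> num_facets Q = num_facets (QQ n T)"
    by (intro exI[of _ "dd n T"] exI[of _ "QQ n T"] exI[of _ MM]) (simp add: dom_eq[OF TV])
  hence "xc (E n) (dom_P n (P_Tcut n T)) \<le> num_facets (QQ n T)"
    unfolding xc_def by (rule Least_le)
  also have "\<dots> \<le> card (CS n T)" unfolding QQ_def by (rule num_facets_PQ[OF finite_CS[OF finT]])
  finally show ?thesis .
qed

lemma xc_empty: "xc (E n) (dom_P n (P_Tcut n {})) = 0"
proof -
  have "T_cuts n {} = {}" unfolding T_cuts_def by auto
  hence dom0: "dom_P n (P_Tcut n {}) = {}" unfolding dom_P_def P_Tcut_def by simp
  have poly: "polyhedron_in 0 {}"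
    unfolding polyhedron_in_def
    by (rule exI[of _ 1], rule exI[of _ "\<lambda>j i. 0"], rule exI[of _ "\<lambda>j. -1"]) auto
  have nf: "num_facets {} = 0" unfolding num_facets_def is_facet_def
    using face_of_imp_subset by auto
  have "\<exists>d Q M. polyhedron_in d Q \<and> dom_P n (P_Tcut n {}) = lin_map (E n) d M ` Q \<and> num_facets Q = 0"
    by (intro exI[of _ 0] exI[of _ "{}"] exI[of _ "\<lambda>e i. 0"]) (simp add: poly nf dom0)
  hence "xc (E n) (dom_P n (P_Tcut n {})) \<le> 0" unfolding xc_def by (rule Least_le)
  thus ?thesis by simp
qed

theorem corollary3:
  shows "\<exists>C::real. C > 0 \<and>
    (\<forall>n T. T \<subseteq> V n \<longrightarrow>
       real (xc (E n) (dom_P n (P_Tcut n T))) \<le> C * real n ^ 2 * 2 ^ card T)"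
proof (intro exI[of _ 10] conjI allI impI)
  fix n T assume TV: "T \<subseteq> V n"
  show "real (xc (E n) (dom_P n (P_Tcut n T))) \<le> 10 * real n ^ 2 * 2 ^ card T"
  proof (cases "T = {}")
    case True thus ?thesis using xc_empty by simp
  next
    case False
    have finT: "finite T" using finite_T[OF TV] .
    obtain t where "t \<in> T" using False by blast
    hence "t < n" using TV unfolding V_def by auto
    hence n1: "1 \<le> n" by simp
    have a: "card (AA T) \<le> card (Pow T)"
      using finT by (intro card_mono) (auto simp: AA_def)
    hence a2: "card (AA T) \<le> 2 ^ card T" using card_Pow[of T] finT by simp
    define A' where "A' = real (card (AA T))"
    define N where "N = real n"
    define P where "P = (2::real) ^ card T"
    have h1: "A' \<le> P" unfolding A'_def P_def using a2
      by (metis of_nat_le_iff of_nat_numeral of_nat_power)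
    have h2: "1 \<le> N" unfolding N_def using n1 by simp
    have h3: "1 \<le> P" unfolding P_def by simp
    have NN: "N \<le> N * N" using h2 by (simp add: mult_le_cancel_left1)
    have NN1: "1 \<le> N * N" using h2 NN by linarith
    have PNN: "P \<le> P * (N * N)" using h3 NN1 mult_left_mono[of 1 "N*N" P] by simp
    have f1: "A' * N \<le> P * (N * N)"
    proof -
      have "A' * N \<le> P * N" using h1 h2 by (intro mult_right_mono) auto
      also have "\<dots> \<le> P * (N * N)" using h3 NN by (intro mult_left_mono) auto
      finally show ?thesis .
    qed
    have f2: "A' * (N * N) \<le> P * (N * N)" using h1 by (intro mult_right_mono) auto
    have f3: "N * N \<le> P * (N * N)" using h3 by (simp add: mult_le_cancel_right1)
    have "real (xc (E n) (dom_P n (P_Tcut n T))) \<le> real (card (CS n T))"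
      using xc_le[OF TV] by simp
    also have "\<dots> \<le> A' + 2 + 2 * (A' * N) + A' * N + 2 * (A' * (N * N)) + N * N"
      unfolding A'_def N_def using card_CS[OF TV] by (metis (mono_tags, lifting) of_nat_add of_nat_le_iff of_nat_mult of_nat_numeral)
    also have "\<dots> \<le> 10 * (P * (N * N))" using h1 h3 PNN f1 f2 f3 by linarith
    also have "\<dots> = 10 * real n ^ 2 * 2 ^ card T" unfolding N_def P_def by (simp add: power2_eq_square algebra_simps)
    finally show ?thesis .
  qed
qed simp


end
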